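(* Let $\mathcal C$ be a set of cycles and $m\ge1$. There exists a nonsingular $m$-stage FSR $f$ with $\Omega(f)=\mathcal C$ if and only if (i) $\sum_{c\in\mathcal C}\mathrm{per}(c)=2^m$, and (ii) the map $v\mapsto \mathrm{lbit}_m(v)$ is injective on $\bigcup_{c\in\mathcal C}\Omega_{m+1}(c)$.
   Context: An $m$-stage FSR with feedback logic $f_1:\{0,1\}^m\to\{0,1\}$ has state transformation $F(x_0,\dots,x_{m-1})=(x_1,\dots,x_{m-1},f_1(x_0,\dots,x_{m-1}))$ and generates the binary sequences $s:\mathbb Z\to\{0,1\}$ with $s(t+m)=f_1(s(t),\dots,s(t+m-1))$ for all $t$; it is nonsingular if $F$ is bijective. A periodic sequence $s$ of least period $p$ determines the cycle $[s(0),\dots,s(p-1)]$ (shifts of $s$ give the same cycle), with $\mathrm{per}(c)=p$. The cycle structure $\Omega(f)$ is the set of cycles of the sequences generated by $f$. For a cycle $c$ given by $s$ with period $p$, $\Omega_k(c)=\{(s(i),s((i+1)\bmod p),\dots,s((i+k-1)\bmod p)):0\le i<p\}\subseteq\{0,1\}^k$. For $v=(a_1,\dots,a_{m+1})$, $\mathrm{lbit}_m(v)=(a_2,\dots,a_{m+1})$ (last $m$ coordinates). *)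

theory Defs
  imports Main
begin

definition window :: "(int \<Rightarrow> bool) \<Rightarrow> int \<Rightarrow> nat \<Rightarrow> bool list" where
  "window s i k = map (\<lambda>j. s (i + int j)) [0..<k]"

definition periodic_seq :: "(int \<Rightarrow> bool) \<Rightarrow> bool" where
  "periodic_seq s \<longleftrightarrow> (\<exists>p::nat. p > 0 \<and> (\<forall>t. s (t + int p) = s t))"

definition least_period :: "(int \<Rightarrow> bool) \<Rightarrow> nat" where
  "least_period s = (LEAST p::nat. p > 0 \<and> (\<forall>t. s (t + int p) = s t))"

definition cycle_of :: "(int \<Rightarrow> bool) \<Rightarrow> (int \<Rightarrow> bool) set" where
  "cycle_of s = {(\<lambda>t. s (t + k)) | k. True}"

definition is_cycle :: "(int \<Rightarrow> bool) set \<Rightarrow> bool" where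
  "is_cycle c \<longleftrightarrow> (\<exists>s. periodic_seq s \<and> c = cycle_of s)"

definition per :: "(int \<Rightarrow> bool) set \<Rightarrow> nat" where
  "per c = least_period (SOME s. s \<in> c)"

definition Omega_k :: "nat \<Rightarrow> (int \<Rightarrow> bool) set \<Rightarrow> bool list set" where
  "Omega_k k c = {window s 0 k | s. s \<in> c}"

definition lbit :: "nat \<Rightarrow> bool list \<Rightarrow> bool list" where
  "lbit m v = drop (length v - m) v"

text \<open>FSR with feedback logic f1 on m-bit states (bool lists of length m).\<close>
definition fsr_F :: "(bool list \<Rightarrow> bool) \<Rightarrow> bool list \<Rightarrow> bool list" where
  "fsr_F f1 x = tl x @ [f1 x]"

definition nonsingular :: "nat \<Rightarrow> (bool list \<Rightarrow> bool) \<Rightarrow> bool" where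
  "nonsingular m f1 \<longleftrightarrow> bij_betw (fsr_F f1) {x. length x = m} {x. length x = m}"

definition generates :: "nat \<Rightarrow> (bool list \<Rightarrow> bool) \<Rightarrow> (int \<Rightarrow> bool) \<Rightarrow> bool" where
  "generates m f1 s \<longleftrightarrow> (\<forall>t. s (t + int m) = f1 (window s t m))"

definition cycle_structure :: "nat \<Rightarrow> (bool list \<Rightarrow> bool) \<Rightarrow> (int \<Rightarrow> bool) set set" where
  "cycle_structure m f1 = {cycle_of s | s. generates m f1 s \<and> periodic_seq s}"

end

theory Submission
  imports Defs
begin


lemma window_length[simp]: "length (window s i k) = k"
  by (simp add: window_def)

lemma window_nth[simp]: "j < k \<Longrightarrow> window s i k ! j = s (i + int j)"
  by (simp add: window_def)

lemma window_shift: "window (\<lambda>t. s (t + k)) i n = window s (i + k) n"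
  by (simp add: window_def add_ac)

lemma window_step:
  assumes "m \<ge> 1" "generates m f1 s"
  shows "fsr_F f1 (window s t m) = window s (t + 1) m"
proof (rule nth_equalityI)
  show "length (fsr_F f1 (window s t m)) = length (window s (t + 1) m)"
    using assms by (simp add: fsr_F_def)
next
  fix j assume "j < length (fsr_F f1 (window s t m))"
  hence j: "j < m" using assms by (simp add: fsr_F_def)
  show "fsr_F f1 (window s t m) ! j = window s (t + 1) m ! j"
  proof (cases "j < m - 1")
    case True thus ?thesis using j by (simp add: fsr_F_def nth_append nth_tl add_ac)
  next
    case False
    hence "j = m - 1" using j by simp
    moreover have "s (t + int m) = f1 (window s t m)" using assms(2) by (simp add: generates_def)
    ultimately show ?thesis using j assms(1) by (simp add: fsr_F_def nth_append of_nat_diff add_ac)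
  qed
qed

lemma generates_shift: "generates m f1 s \<Longrightarrow> generates m f1 (\<lambda>t. s (t + k))"
  unfolding generates_def window_shift
proof (intro allI)
  fix t assume "\<forall>t. s (t + int m) = f1 (window s t m)"
  hence "s ((t + k) + int m) = f1 (window s (t + k) m)" by blast
  thus "s (t + int m + k) = f1 (window s (t + k) m)" by (simp add: add_ac)
qed

lemma determ:
  assumes m: "m \<ge> 1" and g: "generates m f1 s" "generates m f1 s'"
    and inj: "inj_on (fsr_F f1) W" and Ws: "\<forall>t. window s t m \<in> W" and Ws': "\<forall>t. window s' t m \<in> W"
    and eq: "window s a m = window s' b m"
  shows "s (a + t) = s' (b + t)"
proof -
  have fw: "window s (a + int n) m = window s' (b + int n) m" for n
  proof (induction n)
    case 0 then show ?case using eq by simp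
  next
    case (Suc n)
    have "window s (a + int (Suc n)) m = fsr_F f1 (window s (a + int n) m)"
      using window_step[OF m g(1)] by (simp add: add_ac)
    also have "\<dots> = fsr_F f1 (window s' (b + int n) m)" using Suc by simp
    also have "\<dots> = window s' (b + int (Suc n)) m"
      using window_step[OF m g(2)] by (simp add: add_ac)
    finally show ?case .
  qed
  have bw: "window s (a - int n) m = window s' (b - int n) m" for n
  proof (induction n)
    case 0 then show ?case using eq by simp
  next
    case (Suc n)
    have "fsr_F f1 (window s (a - int (Suc n)) m) = window s (a - int n) m"
      using window_step[OF m g(1), of "a - int (Suc n)"] by simp
    moreover have "fsr_F f1 (window s' (b - int (Suc n)) m) = window s' (b - int n) m"
      using window_step[OF m g(2), of "b - int (Suc n)"] by simp
    ultimately show ?case using Suc inj Ws Ws' by (metis inj_on_def)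
  qed
  have "window s (a + t) m = window s' (b + t) m"
  proof (cases "t \<ge> 0")
    case True then show ?thesis using fw[of "nat t"] by simp
  next
    case False then show ?thesis using bw[of "nat (-t)"] by simp
  qed
  hence "window s (a + t) m ! 0 = window s' (b + t) m ! 0" by simp
  thus ?thesis using m by simp
qed

lemma period_mult:
  assumes "\<forall>t. s (t + int p) = s t"
  shows "s (t + q * int p) = s t"
proof -
  have pos: "s (t + int n * int p) = s t" for t n
  proof (induction n arbitrary: t)
    case 0 then show ?case by simp
  next
    case (Suc n)
    have "s (t + int (Suc n) * int p) = s ((t + int n * int p) + int p)" by (simp add: algebra_simps)
    also have "\<dots> = s t" using assms Suc by simp
    finally show ?case .
  qed
  show ?thesis
  proof (cases "q \<ge> 0")
    case True then show ?thesis using pos[of t "nat q"] by simp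
  next
    case False
    have "s ((t + q * int p) + int (nat (-q)) * int p) = s (t + q * int p)" by (rule pos)
    then show ?thesis using False by simp
  qed
qed

lemma lp_props:
  assumes "periodic_seq s"
  shows "least_period s > 0" "\<forall>t. s (t + int (least_period s)) = s t"
    "0 < q \<Longrightarrow> q < least_period s \<Longrightarrow> \<not> (\<forall>t. s (t + int q) = s t)"
proof -
  obtain p where p: "p > 0 \<and> (\<forall>t. s (t + int p) = s t)" using assms periodic_seq_def by blast
  have "least_period s > 0 \<and> (\<forall>t. s (t + int (least_period s)) = s t)"
    unfolding least_period_def by (rule LeastI[of _ p], rule p)
  thus "least_period s > 0" "\<forall>t. s (t + int (least_period s)) = s t" by auto
  show "0 < q \<Longrightarrow> q < least_period s \<Longrightarrow> \<not> (\<forall>t. s (t + int q) = s t)"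
    unfolding least_period_def using not_less_Least by blast
qed

lemma shift_period_iff: "(\<forall>t. s (t + int p + k) = s (t + k)) \<longleftrightarrow> (\<forall>t. s (t + int p) = s t)"
proof
  assume a: "\<forall>t. s (t + int p + k) = s (t + k)"
  show "\<forall>t. s (t + int p) = s t"
  proof
    fix t show "s (t + int p) = s t" using a[rule_format, of "t - k"] by simp
  qed
next
  assume "\<forall>t. s (t + int p) = s t"
  thus "\<forall>t. s (t + int p + k) = s (t + k)" by (metis add.commute add.left_commute)
qed

lemma lp_shift: "least_period (\<lambda>t. s (t + k)) = least_period s"
  unfolding least_period_def using shift_period_iff[where s=s and k=k] by simp

lemma periodic_shift: "periodic_seq s \<Longrightarrow> periodic_seq (\<lambda>t. s (t + k))"
  unfolding periodic_seq_def using shift_period_iff[where s=s and k=k] by simp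

lemma self_in_cycle: "s \<in> cycle_of s"
  unfolding cycle_of_def by (rule CollectI, rule exI[of _ 0]) simp

lemma in_cycle_of: "s' \<in> cycle_of s \<longleftrightarrow> (\<exists>k. s' = (\<lambda>t. s (t + k)))"
  unfolding cycle_of_def by auto

lemma cycle_of_mem: assumes "s' \<in> cycle_of s" shows "cycle_of s' = cycle_of s"
proof -
  obtain k where k: "s' = (\<lambda>t. s (t + k))" using assms in_cycle_of by blast
  show ?thesis
  proof (rule set_eqI)
    fix x
    show "x \<in> cycle_of s' \<longleftrightarrow> x \<in> cycle_of s"
    proof
      assume "x \<in> cycle_of s'"
      then obtain j where "x = (\<lambda>t. s' (t + j))" using in_cycle_of by blast
      hence "x = (\<lambda>t. s (t + (j + k)))" using k by (simp add: add_ac)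
      thus "x \<in> cycle_of s" using in_cycle_of by blast
    next
      assume "x \<in> cycle_of s"
      then obtain j where "x = (\<lambda>t. s (t + j))" using in_cycle_of by blast
      hence "x = (\<lambda>t. s' (t + (j - k)))" using k by (simp add: add_ac)
      thus "x \<in> cycle_of s'" using in_cycle_of by blast
    qed
  qed
qed

lemma per_cycle: "per (cycle_of s) = least_period s"
proof -
  have "(SOME x. x \<in> cycle_of s) \<in> cycle_of s" using self_in_cycle by (metis someI)
  then obtain k where "(SOME x. x \<in> cycle_of s) = (\<lambda>t. s (t + k))" using in_cycle_of by blast
  thus ?thesis unfolding per_def using lp_shift by simp
qed

lemma Omega_cycle: "Omega_k k (cycle_of s) = range (\<lambda>i. window s i k)"
  unfolding Omega_k_def in_cycle_of
  apply (auto simp: window_shift)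
  subgoal for i by (rule exI[of _ "\<lambda>t. s (t + i)"]) (auto simp: window_shift)
  done

lemma card_Omega:
  assumes m: "m \<ge> 1" and per: "periodic_seq s" and g: "generates m f1 s"
    and inj: "inj_on (fsr_F f1) W" and Ws: "\<forall>t. window s t m \<in> W"
  shows "card (Omega_k m (cycle_of s)) = least_period s"
proof -
  let ?p = "least_period s"
  have pp: "?p > 0" "\<forall>t. s (t + int ?p) = s t" using lp_props[OF per] by auto
  have eqi: "Omega_k m (cycle_of s) = (\<lambda>i. window s (int i) m) ` {..<?p}"
  proof -
    have "window s i m = window s (int (nat (i mod int ?p))) m" for i
    proof -
      have "s (i + int x) = s (i mod int ?p + int x)" for x
        using period_mult[OF pp(2), of "i mod int ?p + int x" "i div int ?p"]
        by (metis add.commute add.left_commute mod_div_mult_eq)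
      hence "window s i m = window s (i mod int ?p) m"
        unfolding window_def by simp
      thus ?thesis using pp(1) by simp
    qed
    moreover have "nat (i mod int ?p) < ?p" for i using pp(1) by (simp add: nat_less_iff)
    ultimately have "window s i m \<in> (\<lambda>i. window s (int i) m) ` {..<?p}" for i
      by (metis lessThan_iff image_eqI)
    thus ?thesis unfolding Omega_cycle by auto
  qed
  have "inj_on (\<lambda>i. window s (int i) m) {..<?p}"
  proof (rule inj_onI, rule ccontr)
    fix i j assume ij: "i \<in> {..<?p}" "j \<in> {..<?p}" "window s (int i) m = window s (int j) m" "i \<noteq> j"
    have key: "\<And>a b. a < b \<Longrightarrow> b < ?p \<Longrightarrow> window s (int a) m = window s (int b) m \<Longrightarrow> False"
    proof -
      fix a b assume ab: "a < b" "b < ?p" "window s (int a) m = window s (int b) m"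
      have "\<forall>t. s (t + int (b - a)) = s t"
      proof
        fix t
        have "s (int a + (t - int a)) = s (int b + (t - int a))"
          using determ[OF m g g inj Ws Ws ab(3)] by blast
        thus "s (t + int (b - a)) = s t" using ab(1) by (simp add: of_nat_diff algebra_simps)
      qed
      moreover have "b - a < ?p" using ab by simp
      ultimately show False using lp_props(3)[OF per, of "b - a"] ab by simp
    qed
    show False
    proof (cases "i < j")
      case True then show ?thesis using key ij by auto
    next
      case False then show ?thesis using key[of j i] ij by auto
    qed
  qed
  thus ?thesis unfolding eqi by (simp add: card_image)
qed


lemma is_cycle_mem:
  assumes "is_cycle c" "s \<in> c"
  shows "cycle_of s = c" "periodic_seq s"
proof -
  obtain s0 where s0: "periodic_seq s0" "c = cycle_of s0" using assms(1) is_cycle_def by blast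
  show "cycle_of s = c" using cycle_of_mem[of s s0] assms(2) s0(2) by simp
  obtain k where "s = (\<lambda>t. s0 (t + k))" using assms(2) s0(2) in_cycle_of[of s s0] by auto
  thus "periodic_seq s" using periodic_shift s0(1) by simp
qed

lemma is_cycle_ne: "is_cycle c \<Longrightarrow> \<exists>s. s \<in> c"
  unfolding is_cycle_def using self_in_cycle by blast

lemma count:
  assumes m: "m \<ge> 1" and fin: "finite C" and inj: "inj_on (fsr_F f1) W"
    and cyc: "\<forall>c\<in>C. is_cycle c"
    and gen: "\<forall>c\<in>C. \<forall>s\<in>c. generates m f1 s \<and> (\<forall>t. window s t m \<in> W)"
  shows "card (\<Union>c\<in>C. Omega_k m c) = (\<Sum>c\<in>C. per c)"
proof -
  have cp: "card (Omega_k m c) = per c \<and> per c > 0" if "c \<in> C" for c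
  proof -
    have ic: "is_cycle c" using cyc that by blast
    obtain s where s: "s \<in> c" using is_cycle_ne[OF ic] by blast
    have cs: "cycle_of s = c" "periodic_seq s" using is_cycle_mem[OF ic s] by auto
    have gs: "generates m f1 s" "\<forall>t. window s t m \<in> W" using gen that s by auto
    have "card (Omega_k m (cycle_of s)) = least_period s"
      by (rule card_Omega[OF m cs(2) gs(1) inj gs(2)])
    moreover have "per c = least_period s" using per_cycle[of s] cs(1) by simp
    ultimately show ?thesis using cs(1) lp_props(1)[OF cs(2)] by simp
  qed
  have "card (\<Union>c\<in>C. Omega_k m c) = (\<Sum>c\<in>C. card (Omega_k m c))"
  proof (rule card_UN_disjoint[OF fin])
    show "\<forall>c\<in>C. finite (Omega_k m c)" 
    proof
      fix c assume "c \<in> C"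
      hence "card (Omega_k m c) > 0" using cp by simp
      thus "finite (Omega_k m c)" by (rule card_ge_0_finite)
    qed
    show "\<forall>c1\<in>C. \<forall>c2\<in>C. c1 \<noteq> c2 \<longrightarrow> Omega_k m c1 \<inter> Omega_k m c2 = {}"
    proof (intro ballI impI)
      fix c1 c2 assume c: "c1 \<in> C" "c2 \<in> C" "c1 \<noteq> c2"
      show "Omega_k m c1 \<inter> Omega_k m c2 = {}"
      proof (rule ccontr)
        assume "Omega_k m c1 \<inter> Omega_k m c2 \<noteq> {}"
        then obtain x where x: "x \<in> Omega_k m c1" "x \<in> Omega_k m c2" by blast
        obtain s1 where s1: "s1 \<in> c1" "x = window s1 0 m" using x(1) unfolding Omega_k_def by blast
        obtain s2 where s2: "s2 \<in> c2" "x = window s2 0 m" using x(2) unfolding Omega_k_def by blast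
        have s: "s1 \<in> c1" "s2 \<in> c2" "window s1 0 m = window s2 0 m" using s1 s2 by auto
        have g1: "generates m f1 s1" "\<forall>t. window s1 t m \<in> W" using gen c(1) s(1) by auto
        have g2: "generates m f1 s2" "\<forall>t. window s2 t m \<in> W" using gen c(2) s(2) by auto
        have "s1 (0 + t) = s2 (0 + t)" for t
          by (rule determ[OF m g1(1) g2(1) inj g1(2) g2(2) s(3)])
        hence "s1 = s2" by auto
        moreover have "cycle_of s1 = c1" using is_cycle_mem(1)[of c1 s1] cyc c(1) s(1) by blast
        moreover have "cycle_of s2 = c2" using is_cycle_mem(1)[of c2 s2] cyc c(2) s(2) by blast
        ultimately show False using c(3) by simp
      qed
    qed
  qed
  also have "\<dots> = (\<Sum>c\<in>C. per c)" using cp by (intro sum.cong) auto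
  finally show ?thesis .
qed



lemma lbit_window: "lbit m (window s i (m + 1)) = window s (i + 1) m"
  by (rule nth_equalityI) (auto simp: lbit_def add_ac)

lemma take_window: "take m (window s i (m + 1)) = window s i m"
  by (rule nth_equalityI) auto

lemma last_window: "last (window s i (m + 1)) = s (i + int m)"
  by (simp add: window_def)

lemma fsr_length: "x \<noteq> [] \<Longrightarrow> length (fsr_F f1 x) = length x"
  by (simp add: fsr_F_def)

lemma fsr_nth: "Suc j < length z \<Longrightarrow> fsr_F f1 z ! j = z ! Suc j"
  by (cases z) (auto simp: fsr_F_def nth_append)

lemma fsr_last: "z \<noteq> [] \<Longrightarrow> fsr_F f1 z ! (length z - 1) = f1 z"
  by (simp add: fsr_F_def nth_append)

lemma iter_length: "m \<ge> 1 \<Longrightarrow> length y = m \<Longrightarrow> length ((fsr_F f1 ^^ k) y) = m"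
proof (induction k)
  case (Suc k)
  hence "(fsr_F f1 ^^ k) y \<noteq> []" by auto
  thus ?case using Suc fsr_length by simp
qed simp

lemma nth_iter:
  assumes "m \<ge> 1" "length y = m"
  shows "j < m \<Longrightarrow> (fsr_F f1 ^^ k) y ! j = (fsr_F f1 ^^ (k + j)) y ! 0"
proof (induction j arbitrary: k)
  case 0 then show ?case by simp
next
  case (Suc j)
  have "(fsr_F f1 ^^ k) y ! Suc j = fsr_F f1 ((fsr_F f1 ^^ k) y) ! j"
    using fsr_nth[of j "(fsr_F f1 ^^ k) y" f1] iter_length[OF assms] Suc.prems by simp
  also have "\<dots> = (fsr_F f1 ^^ Suc k) y ! j" by simp
  also have "\<dots> = (fsr_F f1 ^^ (Suc k + j)) y ! 0" using Suc.IH[of "Suc k"] Suc.prems by simp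
  finally show ?case by simp
qed

lemma iter_in:
  assumes "F ` S \<subseteq> S" "x \<in> S" shows "(F ^^ k) x \<in> S"
  using assms by (induction k) auto

lemma iter_cancel:
  assumes "inj_on F S" "F ` S \<subseteq> S" "x \<in> S"
  shows "i < j \<Longrightarrow> (F ^^ i) x = (F ^^ j) x \<Longrightarrow> x = (F ^^ (j - i)) x"
proof (induction i arbitrary: j)
  case 0 then show ?case by simp
next
  case (Suc i)
  obtain j' where j: "j = Suc j'" using Suc.prems by (cases j) auto
  have "F ((F ^^ i) x) = F ((F ^^ j') x)" using Suc.prems j by simp
  hence "(F ^^ i) x = (F ^^ j') x"
    using assms iter_in[OF assms(2,3)] by (meson inj_onD)
  thus ?case using Suc.IH[of j'] Suc.prems j by simp
qed

lemma iter_period: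
  assumes "inj_on F S" "F ` S \<subseteq> S" "x \<in> S" "finite S"
  shows "\<exists>n>0. (F ^^ n) x = x"
proof -
  let ?g = "\<lambda>k. (F ^^ k) x"
  have "\<not> inj_on ?g {0..card S}"
  proof
    assume "inj_on ?g {0..card S}"
    moreover have "?g ` {0..card S} \<subseteq> S" using iter_in[OF assms(2,3)] by auto
    ultimately have "card {0..card S} \<le> card S" using card_inj_on_le assms(4) by blast
    thus False by simp
  qed
  then obtain i j where ij: "i \<noteq> j" "?g i = ?g j" unfolding inj_on_def by blast
  show ?thesis
  proof (cases "i < j")
    case True then show ?thesis using iter_cancel[OF assms(1-3) True ij(2)] by (intro exI[of _ "j - i"]) auto
  next
    case False hence "j < i" using ij by simp
    then show ?thesis using iter_cancel[OF assms(1-3) \<open>j < i\<close>] ij(2) by (intro exI[of _ "i - j"]) auto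
  qed
qed

lemma funpow_mod:
  assumes "n > 0" "(F ^^ n) x = x"
  shows "(F ^^ a) x = (F ^^ (a mod n)) x"
proof -
  have k: "(F ^^ (k * n)) x = x" for k
    by (induction k) (auto simp: funpow_add assms(2))
  have "a = a mod n + (a div n) * n" by simp
  hence "(F ^^ a) x = (F ^^ (a mod n)) ((F ^^ ((a div n) * n)) x)"
    by (metis funpow_add o_apply)
  thus ?thesis using k by simp
qed

lemma exists_seq:
  assumes m: "m \<ge> 1" and ns: "nonsingular m f1" and x: "length x = m"
  shows "\<exists>s. generates m f1 s \<and> periodic_seq s \<and> window s 0 m = x"
proof -
  let ?F = "fsr_F f1" let ?S = "{x::bool list. length x = m}"
  have b: "inj_on ?F ?S" "?F ` ?S = ?S" using ns unfolding nonsingular_def bij_betw_def by auto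
  have fin: "finite ?S" using finite_lists_length_eq[of "UNIV::bool set" m] by simp
  obtain n where n: "n > 0" "(?F ^^ n) x = x" using iter_period[OF b(1) _ _ fin] b(2) x by auto
  let ?G = "\<lambda>a. (?F ^^ a) x"
  have Gm: "?G a = ?G (a mod n)" for a using funpow_mod[OF n] by blast
  define s where "s t = ?G (nat (t mod int n)) ! 0" for t
  have Geq: "?G (nat ((t + int j) mod int n)) = ?G (nat (t mod int n) + j)" for t j
  proof -
    have "int ((nat (t mod int n) + j) mod n) = (t + int j) mod int n"
      using n(1) by (simp add: of_nat_mod mod_add_left_eq)
    hence "nat ((t + int j) mod int n) = (nat (t mod int n) + j) mod n" by linarith
    thus ?thesis using Gm by metis
  qed
  have W: "window s t m = ?G (nat (t mod int n))" for t
  proof (rule nth_equalityI)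
    show "length (window s t m) = length (?G (nat (t mod int n)))" using iter_length[OF m x] by simp
  next
    fix j assume "j < length (window s t m)"
    hence j: "j < m" by simp
    have "window s t m ! j = ?G (nat ((t + int j) mod int n)) ! 0" using j by (simp add: s_def)
    also have "\<dots> = ?G (nat (t mod int n) + j) ! 0" using Geq by simp
    also have "\<dots> = ?G (nat (t mod int n)) ! j" using nth_iter[OF m x j] by simp
    finally show "window s t m ! j = ?G (nat (t mod int n)) ! j" .
  qed
  have step: "window s (t + 1) m = ?F (window s t m)" for t
    using W Geq[of t 1] by simp
  have gen: "generates m f1 s"
    unfolding generates_def
  proof
    fix t
    have ne: "window s t m \<noteq> []" using m by (metis window_length list.size(3) not_one_le_zero)
    have "s (t + int m) = window s (t + 1) m ! (m - 1)" using m by (simp add: of_nat_diff add_ac)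
    also have "\<dots> = ?F (window s t m) ! (length (window s t m) - 1)" using step by simp
    also have "\<dots> = f1 (window s t m)" using fsr_last[OF ne] by simp
    finally show "s (t + int m) = f1 (window s t m)" .
  qed
  have per: "periodic_seq s" unfolding periodic_seq_def s_def using n(1) by (intro exI[of _ n]) simp
  have "window s 0 m = x" using W by simp
  thus ?thesis using gen per by blast
qed



lemma card_S: "card {x::bool list. length x = m} = 2 ^ m"
  using card_lists_length_eq[of "UNIV::bool set" m] by simp

lemma fin_S: "finite {x::bool list. length x = n}"
  using finite_lists_length_eq[of "UNIV::bool set" n] by simp

lemma window_in_Omega:
  assumes "is_cycle c" "s \<in> c" shows "window s t k \<in> Omega_k k c"
proof -
  have "Omega_k k c = range (\<lambda>i. window s i k)"
    using is_cycle_mem(1)[OF assms] Omega_cycle[of k s] by simp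
  thus ?thesis by simp
qed

lemma Omega_mem:
  assumes "v \<in> Omega_k k c" obtains s where "s \<in> c" "v = window s 0 k"
  using assms unfolding Omega_k_def by blast

lemma forward:
  assumes cyc: "\<forall>c\<in>C. is_cycle c" and m: "m \<ge> 1"
    and ns: "nonsingular m f1" and cs: "cycle_structure m f1 = C"
  shows "(\<Sum>c\<in>C. per c) = 2 ^ m \<and> inj_on (lbit m) (\<Union>c\<in>C. Omega_k (m + 1) c)"
proof -
  let ?F = "fsr_F f1" let ?S = "{x::bool list. length x = m}"
  have inj: "inj_on ?F ?S" using ns unfolding nonsingular_def bij_betw_def by auto
  have gen: "\<forall>c\<in>C. \<forall>s\<in>c. generates m f1 s \<and> (\<forall>t. window s t m \<in> ?S)"
  proof (intro ballI)
    fix c s assume c: "c \<in> C" and s: "s \<in> c"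
    obtain s0 where s0: "c = cycle_of s0" "generates m f1 s0"
      using c cs unfolding cycle_structure_def by blast
    obtain k where "s = (\<lambda>t. s0 (t + k))" using s s0(1) in_cycle_of by blast
    hence "generates m f1 s" using generates_shift s0(2) by simp
    thus "generates m f1 s \<and> (\<forall>t. window s t m \<in> ?S)" by simp
  qed
  have WS: "(\<Union>c\<in>C. Omega_k m c) = ?S"
  proof
    show "(\<Union>c\<in>C. Omega_k m c) \<subseteq> ?S" unfolding Omega_k_def by auto
    show "?S \<subseteq> (\<Union>c\<in>C. Omega_k m c)"
    proof
      fix x assume "x \<in> ?S"
      then obtain s where s: "generates m f1 s" "periodic_seq s" "window s 0 m = x"
        using exists_seq[OF m ns] by auto
      have "cycle_of s \<in> C" using cs s unfolding cycle_structure_def by blast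
      moreover have "x \<in> Omega_k m (cycle_of s)" using s(3) unfolding Omega_cycle by auto
      ultimately show "x \<in> (\<Union>c\<in>C. Omega_k m c)" by blast
    qed
  qed
  have ne: "Omega_k m c \<noteq> {}" if "c \<in> C" for c
  proof -
    have ic: "is_cycle c" using cyc that by blast
    obtain s where "s \<in> c" using is_cycle_ne[OF ic] by blast
    hence "window s 0 m \<in> Omega_k m c" by (rule window_in_Omega[OF ic])
    thus ?thesis by blast
  qed
  have disj: "Omega_k m c1 \<inter> Omega_k m c2 = {}" if c: "c1 \<in> C" "c2 \<in> C" "c1 \<noteq> c2" for c1 c2
  proof (rule ccontr)
    assume "Omega_k m c1 \<inter> Omega_k m c2 \<noteq> {}"
    then obtain x where x: "x \<in> Omega_k m c1" "x \<in> Omega_k m c2" by blast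
    obtain s1 where s1: "s1 \<in> c1" "x = window s1 0 m" using x(1) by (rule Omega_mem)
    obtain s2 where s2: "s2 \<in> c2" "x = window s2 0 m" using x(2) by (rule Omega_mem)
    have g1: "generates m f1 s1" "\<forall>t. window s1 t m \<in> ?S" using gen c(1) s1(1) by auto
    have g2: "generates m f1 s2" "\<forall>t. window s2 t m \<in> ?S" using gen c(2) s2(1) by auto
    have "s1 (0 + t) = s2 (0 + t)" for t
      by (rule determ[OF m g1(1) g2(1) inj g1(2) g2(2)]) (use s1 s2 in simp)
    hence "s1 = s2" by auto
    moreover have "cycle_of s1 = c1" using is_cycle_mem(1)[of c1 s1] cyc c(1) s1(1) by blast
    moreover have "cycle_of s2 = c2" using is_cycle_mem(1)[of c2 s2] cyc c(2) s2(1) by blast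
    ultimately show False using c(3) by simp
  qed
  have finC: "finite C"
  proof -
    have "inj_on (Omega_k m) C"
    proof (rule inj_onI, rule ccontr)
      fix c1 c2 assume a: "c1 \<in> C" "c2 \<in> C" "Omega_k m c1 = Omega_k m c2" "c1 \<noteq> c2"
      have "Omega_k m c1 \<inter> Omega_k m c2 = {}" by (rule disj[OF a(1) a(2) a(4)])
      moreover have "Omega_k m c1 \<noteq> {}" by (rule ne[OF a(1)])
      ultimately show False using a(3) by simp
    qed
    moreover have "Omega_k m ` C \<subseteq> Pow ?S" unfolding Omega_k_def by auto
    moreover have "finite (Pow ?S)" using fin_S by simp
    ultimately show ?thesis using finite_imageD finite_subset by metis
  qed
  have "card (\<Union>c\<in>C. Omega_k m c) = (\<Sum>c\<in>C. per c)"
    by (rule count[OF m finC inj cyc gen])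
  hence sum: "(\<Sum>c\<in>C. per c) = 2 ^ m" using WS card_S by simp
  have "inj_on (lbit m) (\<Union>c\<in>C. Omega_k (m + 1) c)"
  proof (rule inj_onI)
    fix v1 v2 assume v: "v1 \<in> (\<Union>c\<in>C. Omega_k (m + 1) c)" "v2 \<in> (\<Union>c\<in>C. Omega_k (m + 1) c)"
      "lbit m v1 = lbit m v2"
    obtain c1 where c1: "c1 \<in> C" "v1 \<in> Omega_k (m + 1) c1" using v(1) by blast
    obtain c2 where c2: "c2 \<in> C" "v2 \<in> Omega_k (m + 1) c2" using v(2) by blast
    obtain s1 where s1: "s1 \<in> c1" "v1 = window s1 0 (m + 1)" using c1(2) by (rule Omega_mem)
    obtain s2 where s2: "s2 \<in> c2" "v2 = window s2 0 (m + 1)" using c2(2) by (rule Omega_mem)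
    have g1: "generates m f1 s1" "\<forall>t. window s1 t m \<in> ?S" using gen c1(1) s1(1) by auto
    have g2: "generates m f1 s2" "\<forall>t. window s2 t m \<in> ?S" using gen c2(1) s2(1) by auto
    have w: "window s1 (0 + 1) m = window s2 (0 + 1) m"
      using v(3) unfolding s1(2) s2(2) lbit_window .
    have h: "s1 (1 + t) = s2 (1 + t)" for t
      by (rule determ[OF m g1(1) g2(1) inj g1(2) g2(2)]) (use w in simp)
    have "s1 = s2"
    proof
      fix t show "s1 t = s2 t" using h[of "t - 1"] by simp
    qed
    thus "v1 = v2" using s1 s2 by simp
  qed
  thus ?thesis using sum by simp
qed



lemma backward:
  assumes cyc: "\<forall>c\<in>C. is_cycle c" and m: "m \<ge> 1"
    and sum: "(\<Sum>c\<in>C. per c) = 2 ^ m" and injl: "inj_on (lbit m) (\<Union>c\<in>C. Omega_k (m + 1) c)"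
  shows "\<exists>f1. nonsingular m f1 \<and> cycle_structure m f1 = C"
proof -
  let ?S = "{x::bool list. length x = m}"
  define U where "U = (\<Union>c\<in>C. Omega_k (m + 1) c)"
  define W where "W = (\<Union>c\<in>C. Omega_k m c)"
  have finC: "finite C"
  proof (rule ccontr)
    assume "infinite C" hence "(\<Sum>c\<in>C. per c) = 0" by simp
    thus False using sum by simp
  qed
  have inU: "window s t (m + 1) \<in> U" if "c \<in> C" "s \<in> c" for c s t
    unfolding U_def using window_in_Omega[of c s t "m + 1"] cyc that by blast
  have inW: "window s t m \<in> W" if "c \<in> C" "s \<in> c" for c s t
    unfolding W_def using window_in_Omega[of c s t m] cyc that by blast
  have Umem: "\<exists>c\<in>C. \<exists>s\<in>c. v = window s 0 (m + 1)" if "v \<in> U" for v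
    using that unfolding U_def by (blast elim: Omega_mem)
  have Wmem: "\<exists>c\<in>C. \<exists>s\<in>c. x = window s 0 m" if "x \<in> W" for x
    using that unfolding W_def by (blast elim: Omega_mem)
  have lU: "lbit m ` U = W"
  proof
    show "lbit m ` U \<subseteq> W"
    proof
      fix x assume "x \<in> lbit m ` U"
      then obtain v where v: "v \<in> U" "x = lbit m v" by blast
      obtain c s where cs: "c \<in> C" "s \<in> c" "v = window s 0 (m + 1)" using Umem[OF v(1)] by blast
      have "x = window s (0 + 1) m" using v(2) cs(3) lbit_window by simp
      thus "x \<in> W" using inW cs by blast
    qed
    show "W \<subseteq> lbit m ` U"
    proof
      fix x assume "x \<in> W"
      obtain c s where cs: "c \<in> C" "s \<in> c" "x = window s 0 m" using Wmem[OF \<open>x \<in> W\<close>] by blast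
      have "x = lbit m (window s (-1) (m + 1))" using cs(3) lbit_window[of m s "-1"] by simp
      thus "x \<in> lbit m ` U" using inU[OF cs(1,2)] by blast
    qed
  qed
  have tU: "take m ` U = W"
  proof
    show "take m ` U \<subseteq> W"
    proof
      fix x assume "x \<in> take m ` U"
      then obtain v where v: "v \<in> U" "x = take m v" by blast
      obtain c s where cs: "c \<in> C" "s \<in> c" "v = window s 0 (m + 1)" using Umem[OF v(1)] by blast
      have "x = window s 0 m" using v(2) cs(3) take_window by simp
      thus "x \<in> W" using inW cs by blast
    qed
    show "W \<subseteq> take m ` U"
    proof
      fix x assume "x \<in> W"
      obtain c s where cs: "c \<in> C" "s \<in> c" "x = window s 0 m" using Wmem[OF \<open>x \<in> W\<close>] by blast
      have "x = take m (window s 0 (m + 1))" using cs(3) take_window[of m s 0] by simp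
      thus "x \<in> take m ` U" using inU[OF cs(1,2)] by blast
    qed
  qed
  have finU: "finite U"
  proof (rule finite_subset[OF _ fin_S[of "m + 1"]])
    show "U \<subseteq> {x. length x = m + 1}" using Umem by fastforce
  qed
  have injl': "inj_on (lbit m) U" using injl unfolding U_def .
  have cardUW: "card W = card U" using card_image[OF injl'] lU by simp
  have injt: "inj_on (take m) U"
    by (rule eq_card_imp_inj_on[OF finU]) (use tU cardUW in simp)
  define f1 where "f1 x = (\<exists>v\<in>U. take m v = x \<and> last v)" for x
  have gen1: "generates m f1 s" if "c \<in> C" "s \<in> c" for c s
    unfolding generates_def
  proof
    fix t
    let ?v = "window s t (m + 1)"
    have v: "?v \<in> U" "take m ?v = window s t m" "last ?v = s (t + int m)"
      using inU[OF that] take_window last_window by auto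
    have "f1 (window s t m) \<longleftrightarrow> last ?v"
      unfolding f1_def using v(1,2) injt by (metis inj_onD)
    thus "s (t + int m) = f1 (window s t m)" using v(3) by simp
  qed
  have Fx: "fsr_F f1 x = lbit m v" if vx: "v \<in> U" "x = take m v" for x v
  proof -
    obtain c s where cs: "c \<in> C" "s \<in> c" "v = window s 0 (m + 1)" using Umem[OF vx(1)] by blast
    have "x = window s 0 m" using vx(2) cs(3) take_window by simp
    hence "fsr_F f1 x = window s (0 + 1) m" using window_step[OF m gen1[OF cs(1,2)]] by simp
    thus ?thesis using cs(3) lbit_window by simp
  qed
  have injF: "inj_on (fsr_F f1) W"
  proof (rule inj_onI)
    fix x y assume xy: "x \<in> W" "y \<in> W" "fsr_F f1 x = fsr_F f1 y"
    obtain v where v: "v \<in> U" "x = take m v" using xy(1) tU by blast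
    obtain w where w: "w \<in> U" "y = take m w" using xy(2) tU by blast
    have "lbit m v = lbit m w" using Fx[OF v] Fx[OF w] xy(3) by simp
    hence "v = w" using injl' v(1) w(1) by (meson inj_onD)
    thus "x = y" using v w by simp
  qed
  have FW: "fsr_F f1 ` W \<subseteq> W"
  proof
    fix y assume "y \<in> fsr_F f1 ` W"
    then obtain x where x: "x \<in> W" "y = fsr_F f1 x" by blast
    obtain v where v: "v \<in> U" "x = take m v" using x(1) tU by blast
    show "y \<in> W" using Fx[OF v] x(2) lU v(1) by blast
  qed
  have gen: "\<forall>c\<in>C. \<forall>s\<in>c. generates m f1 s \<and> (\<forall>t. window s t m \<in> W)"
    using gen1 inW by blast
  have "card W = (\<Sum>c\<in>C. per c)" unfolding W_def by (rule count[OF m finC injF[unfolded W_def] cyc gen[unfolded W_def]])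
  hence cW: "card W = card ?S" using sum card_S by simp
  have WsubS: "W \<subseteq> ?S" unfolding W_def Omega_k_def by auto
  have WS: "W = ?S" by (rule card_subset_eq[OF fin_S WsubS cW])
  have ns: "nonsingular m f1"
    unfolding nonsingular_def bij_betw_def
    using injF FW endo_inj_surj[OF _ FW injF] finU cardUW WS fin_S by auto
  have "cycle_structure m f1 = C"
  proof
    show "cycle_structure m f1 \<subseteq> C"
    proof
      fix c' assume "c' \<in> cycle_structure m f1"
      then obtain s where s: "c' = cycle_of s" "generates m f1 s" "periodic_seq s"
        unfolding cycle_structure_def by blast
      have "window s 0 m \<in> W" using WS by simp
      then obtain c s' where cs: "c \<in> C" "s' \<in> c" "window s 0 m = window s' 0 m"
        using Wmem by blast
      have g': "generates m f1 s'" using gen1 cs by blast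
      have ws: "\<forall>t. window s t m \<in> W" "\<forall>t. window s' t m \<in> W" using WS by auto
      have h: "s (0 + t) = s' (0 + t)" for t
        by (rule determ[OF m s(2) g' injF ws(1) ws(2) cs(3)])
      hence "s = s'" by auto
      moreover have "cycle_of s' = c" using is_cycle_mem(1)[of c s'] cyc cs by blast
      ultimately show "c' \<in> C" using s(1) cs(1) by simp
    qed
    show "C \<subseteq> cycle_structure m f1"
    proof
      fix c assume c: "c \<in> C"
      obtain s where s: "s \<in> c" using is_cycle_ne cyc c by blast
      have "cycle_of s = c" "periodic_seq s" using is_cycle_mem[of c s] cyc c s by auto
      moreover have "generates m f1 s" using gen1 c s by blast
      ultimately show "c \<in> cycle_structure m f1" unfolding cycle_structure_def by blast
    qed
  qed
  thus ?thesis using ns by blast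
qed

theorem lemma4:
  fixes C :: "(int \<Rightarrow> bool) set set" and m :: nat
  assumes "\<forall>c\<in>C. is_cycle c" and "m \<ge> 1"
  shows "(\<exists>f1. nonsingular m f1 \<and> cycle_structure m f1 = C) \<longleftrightarrow>
         ((\<Sum>c\<in>C. per c) = 2 ^ m \<and> inj_on (lbit m) (\<Union>c\<in>C. Omega_k (m + 1) c))"
  using forward[OF assms] backward[OF assms] by blast


end
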